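(* Let $n\ge2$, $\varepsilon>0$, and let $v\in C^2(\mathscr{S}_\varepsilon)\cap C^1(\overline{\mathscr{S}_\varepsilon})$ be the solution of the boundary value problem $$\mathscr{L}v=R \ \text{ in } \mathscr{S}_\varepsilon,\qquad v=0 \ \text{ on } \partial\mathscr{S}_\varepsilon,\qquad\text{where } R(x)=\frac{2n}{|x|^2+n}-\frac{2|x|^2}{(|x|^2+n)^2}.$$ Then $$\int |\nabla v|^2 \, \mathrm{d}\gamma_{\mathscr{S}_{\varepsilon}} \le 36\, e^{\varepsilon^2/2}\, \varepsilon^2.$$
   Context: $\gamma_n$ is the standard Gaussian measure on $\mathbb R^n$ with density $(2\pi)^{-n/2}e^{-|x|^2/2}$, and $\gamma_S(A)=\gamma_n(A\cap S)/\gamma_n(S)$. $\mathscr{L}v=\Delta v-\sum_i x_i\partial_iv$. Writing $x=(x_1,x')$ with $x'\in\mathbb R^{n-1}$, $\mathscr{S}_{\varepsilon}=\{x\in\mathbb R^n:\ |x_1|<\varepsilon,\ |x'|^2<2n\}$. *)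

theory Defs
  imports "HOL-Analysis.Analysis"
begin

definition gauss_density :: "real ^ 'n \<Rightarrow> real" where
  "gauss_density x = (2 * pi) powr (- real CARD('n) / 2) * exp (- (norm x)\<^sup>2 / 2)"

definition gaussian_measure :: "(real ^ 'n) measure" where
  "gaussian_measure = density lborel (\<lambda>x. ennreal (gauss_density x))"

text \<open>Integral with respect to the conditioned measure gamma_S = gamma_n(. \<inter> S)/gamma_n(S).\<close>
definition gauss_cond_integral :: "(real ^ 'n) set \<Rightarrow> (real ^ 'n \<Rightarrow> real) \<Rightarrow> real" where
  "gauss_cond_integral S f =
     (set_lebesgue_integral gaussian_measure S f) / measure gaussian_measure S"

text \<open>The slab S_eps; coordinate k plays the role of x_1, the others form x'.\<close>
definition slab :: "'n \<Rightarrow> real \<Rightarrow> (real ^ 'n) set" where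
  "slab k \<epsilon> = {x. \<bar>x $ k\<bar> < \<epsilon> \<and> (\<Sum>i\<in>UNIV - {k}. (x $ i)\<^sup>2) < 2 * real CARD('n)}"

definition R_fun :: "real ^ 'n \<Rightarrow> real" where
  "R_fun x = 2 * real CARD('n) / ((norm x)\<^sup>2 + real CARD('n))
             - 2 * (norm x)\<^sup>2 / ((norm x)\<^sup>2 + real CARD('n))\<^sup>2"

end

theory Submission
  imports Defs
begin



lemma lborel_translate_integral:
  fixes F :: "real^'n \<Rightarrow> real" and c :: "real^'n"
  assumes Fm: "F \<in> borel_measurable borel"
  shows "integral\<^sup>L lborel (\<lambda>x. F (c + x)) = integral\<^sup>L lborel F"
proof -
  have "integral\<^sup>L lborel F = integral\<^sup>L (distr lborel borel ((+) c)) F"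
    by (simp add: lborel_distr_plus)
  also have "\<dots> = integral\<^sup>L lborel (\<lambda>x. F (c + x))"
    by (rule integral_distr) (auto simp: Fm)
  finally show ?thesis ..
qed

lemma cball_finite': "emeasure lborel (cball (0::'a::euclidean_space) R) < top"
  using emeasure_lborel_cball_finite[of "0::'a" R] by simp

lemma bsupp_integrable:
  fixes G :: "'a::euclidean_space \<Rightarrow> real"
  assumes "G \<in> borel_measurable borel" "\<And>x. \<bar>G x\<bar> \<le> C" "\<And>x. norm x > R \<Longrightarrow> G x = 0"
  shows "integrable lborel G"
proof (rule Bochner_Integration.integrable_bound)
  show "integrable lborel (\<lambda>x. C * indicator (cball 0 R) x)"
    by (intro integrable_mult_right integrable_real_indicator) (auto simp: cball_finite')
  show "G \<in> borel_measurable lborel" using assms(1) by simp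
  show "AE x in lborel. norm (G x) \<le> norm (C * indicator (cball 0 R) x)"
  proof (intro AE_I2)
    fix x show "norm (G x) \<le> norm (C * indicator (cball 0 R) x)"
    proof (cases "norm x \<le> R")
      case True then show ?thesis using assms(2)[of x] by (simp add: indicator_def)
    next
      case False then show ?thesis using assms(3)[of x] by simp
    qed
  qed
qed

lemma div_zero:
  fixes F f :: "real^'n \<Rightarrow> real" and i :: 'n
  assumes Fm: "F \<in> borel_measurable borel" and fm: "f \<in> borel_measurable borel"
  and Fsupp: "\<And>x. norm x > r \<Longrightarrow> F x = 0"
  and Fb: "\<And>x. \<bar>F x\<bar> \<le> C"
  and der: "\<And>x. ((\<lambda>t. F (x + t *\<^sub>R axis i 1)) has_real_derivative f x) (at 0)"
  and fb: "\<And>x. \<bar>f x\<bar> \<le> M"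
  shows "integrable lborel f \<and> integral\<^sup>L lborel f = 0"
proof -
  define e :: "real^'n" where "e = axis i 1"
  have ne: "norm e = 1" unfolding e_def by simp
  define h :: "nat \<Rightarrow> real" where "h m = inverse (real (Suc m))" for m
  have hpos: "h m > 0" for m unfolding h_def by simp
  have hle: "h m \<le> 1" for m unfolding h_def by (simp add: field_simps)
  define s where "s m x = (F (x + h m *\<^sub>R e) - F x) / h m" for m x
  have der2: "((\<lambda>t. F (x + t *\<^sub>R e)) has_real_derivative f (x + t *\<^sub>R e)) (at t)" for x t
  proof -
    have "((\<lambda>u. F ((x + t *\<^sub>R e) + u *\<^sub>R e)) has_real_derivative f (x + t *\<^sub>R e)) (at 0)"
      using der[of "x + t *\<^sub>R e"] unfolding e_def .
    then have "((\<lambda>u. F (x + (u + t) *\<^sub>R e)) has_real_derivative f (x + t *\<^sub>R e)) (at 0)"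
    proof -
      have "(\<lambda>u. F ((x + t *\<^sub>R e) + u *\<^sub>R e)) = (\<lambda>u. F (x + (u + t) *\<^sub>R e))"
        by (rule ext) (simp add: algebra_simps)
      then show ?thesis using \<open>((\<lambda>u. F ((x + t *\<^sub>R e) + u *\<^sub>R e)) has_real_derivative f (x + t *\<^sub>R e)) (at 0)\<close> by simp
    qed
    then show ?thesis using DERIV_shift[of "\<lambda>u. F (x + u *\<^sub>R e)" "f (x + t *\<^sub>R e)" 0 t]
      by simp
  qed
  have Mnn: "M \<ge> 0" using fb[of 0] by simp
  have sbound: "\<bar>s m x\<bar> \<le> M" for m x
  proof -
    obtain z where "F (x + h m *\<^sub>R e) - F (x + 0 *\<^sub>R e) = (h m - 0) * f (x + z *\<^sub>R e)"
      using MVT2[of 0 "h m" "\<lambda>t. F (x + t *\<^sub>R e)" "\<lambda>t. f (x + t *\<^sub>R e)"] hpos[of m] der2 by blast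
    then have "s m x = f (x + z *\<^sub>R e)" unfolding s_def using hpos[of m] by simp
    then show ?thesis using fb by simp
  qed
  have szero: "s m x = 0" if "norm x > r + 1" for m x
  proof -
    have "norm (h m *\<^sub>R e) \<le> 1" using hle[of m] hpos[of m] ne by simp
    then have "norm (x + h m *\<^sub>R e) > r"
      using that norm_triangle_ineq2[of x "- (h m *\<^sub>R e)"] by simp
    then show ?thesis unfolding s_def using Fsupp that by simp
  qed
  have cbf: "emeasure lborel (cball (0::real^'n) R) < top" for R
    using emeasure_lborel_cball_finite[of "0::real^'n" R] by simp
  define w where "w x = M * indicator (cball (0::real^'n) (r + 1)) x" for x
  have wint: "integrable lborel w" unfolding w_def
    by (intro integrable_mult_right integrable_real_indicator) (auto simp: cbf)
  have sm: "s m \<in> borel_measurable borel" for m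
    unfolding s_def by (intro borel_measurable_divide borel_measurable_diff)
      (auto intro!: measurable_compose[OF _ Fm])
  have lim: "(\<lambda>m. s m x) \<longlonglongrightarrow> f x" for x
  proof -
    have d: "((\<lambda>t. (F (x + t *\<^sub>R e) - F x) / t) \<longlongrightarrow> f x) (at 0)"
      using der2[of x 0] unfolding DERIV_def by simp
    have "filterlim h (at 0) sequentially"
      unfolding h_def
      using LIMSEQ_inverse_real_of_nat by (auto simp: filterlim_at simp del: of_nat_Suc)
    from filterlim_compose[OF d this] show ?thesis unfolding s_def by (simp add: o_def)
  qed
  have bnd: "\<bar>s m x\<bar> \<le> w x" for m x
    using sbound[of m x] szero[of x m] Mnn unfolding w_def by (auto simp: indicator_def)
  have Fint: "integrable lborel F"
    by (rule bsupp_integrable[OF Fm Fb Fsupp])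
  have s0: "integral\<^sup>L lborel (s m) = 0" for m
  proof -
    have "integral\<^sup>L lborel (\<lambda>x. F (h m *\<^sub>R e + x)) = integral\<^sup>L lborel F"
      by (rule lborel_translate_integral[OF Fm])
    moreover have "integrable lborel (\<lambda>x. F (h m *\<^sub>R e + x))"
    proof (rule bsupp_integrable[where C=C and R="r+1"])
      show "(\<lambda>x. F (h m *\<^sub>R e + x)) \<in> borel_measurable borel"
        by (auto intro!: measurable_compose[OF _ Fm])
      show "\<bar>F (h m *\<^sub>R e + x)\<bar> \<le> C" for x by (rule Fb)
      fix x :: "real^'n" assume "norm x > r + 1"
      moreover have "norm (h m *\<^sub>R e) \<le> 1" using hle[of m] hpos[of m] ne by simp
      ultimately have "norm (x + h m *\<^sub>R e) > r"
        using norm_triangle_ineq2[of x "- (h m *\<^sub>R e)"] by simp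
      then show "F (h m *\<^sub>R e + x) = 0" using Fsupp by (simp add: add.commute)
    qed
    ultimately show ?thesis unfolding s_def using Fint
      by (simp add: add.commute)
  qed
  have A: "integrable lborel f"
    by (rule integrable_dominated_convergence[where s=s and w=w]) (auto simp: fm sm wint lim bnd intro!: AE_I2)
  have "(\<lambda>m. integral\<^sup>L lborel (s m)) \<longlonglongrightarrow> integral\<^sup>L lborel f"
    by (rule integral_dominated_convergence[where s=s and w=w]) (auto simp: fm sm wint lim bnd intro!: AE_I2)
  then have "integral\<^sup>L lborel f = 0" using s0 by (simp add: LIMSEQ_const_iff)
  with A show ?thesis by simp
qed



lemma nsq: "(norm (x::real^'n))^2 = (\<Sum>i\<in>UNIV. (x$i)^2)"
  by (simp only: power2_norm_eq_inner) (simp add: inner_vec_def power2_eq_square)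

lemma nsq_split: "(norm (x::real^'n))^2 = (x$k)^2 + (\<Sum>i\<in>UNIV-{k}. (x$i)^2)"
  unfolding nsq by (simp add: sum.remove)

lemma R_pos: "R_fun (x::real^'n) > 0" and R_le2: "R_fun (x::real^'n) \<le> 2"
proof -
  define a where "a = (norm x)^2"
  define n where "n = real CARD('n)"
  have a: "a \<ge> 0" unfolding a_def by simp
  have n: "n \<ge> 1" unfolding n_def by simp
  have R: "R_fun x = 2*n/(a+n) - 2*a/(a+n)^2" unfolding R_fun_def a_def n_def by simp
  have an: "a + n > 0" using a n by simp
  have "a \<le> n*a" using mult_right_mono[of 1 n a] n a by simp
  moreover have "n*n > 0" using n by simp
  ultimately have "2*a < 2*n*(a+n)" by (simp add: algebra_simps)
  then have "2*a/(a+n)^2 < 2*n*(a+n)/(a+n)^2"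
    using an by (intro divide_strict_right_mono) auto
  also have "\<dots> = 2*n/(a+n)" using an by (simp add: power2_eq_square)
  finally have "2*a/(a+n)^2 < 2*n/(a+n)" .
  then show "R_fun x > 0" using R by simp
  have "2*n/(a+n) \<le> 2" using a n by (simp add: field_simps)
  moreover have "2*a/(a+n)^2 \<ge> 0" using a n by simp
  ultimately show "R_fun x \<le> 2" using R by simp
qed

lemma line_deriv:
  fixes f :: "real^'n \<Rightarrow> real"
  assumes "(f has_derivative (\<lambda>h. D \<bullet> h)) (at (x + t *\<^sub>R e))"
  shows "((\<lambda>s. f (x + s *\<^sub>R e)) has_real_derivative D \<bullet> e) (at t)"
proof -
  have l: "((\<lambda>s. x + s *\<^sub>R e) has_derivative (\<lambda>s. s *\<^sub>R e)) (at t)"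
    by (auto intro!: derivative_eq_intros)
  have "((\<lambda>s. f (x + s *\<^sub>R e)) has_derivative (\<lambda>s. D \<bullet> (s *\<^sub>R e))) (at t)"
    by (rule has_derivative_compose[OF l]) (use assms in simp)
  then show ?thesis
    by (rule has_derivative_imp_has_field_derivative) (simp add: mult.commute)
qed

lemma line_deriv_vec:
  fixes F :: "real^'n \<Rightarrow> real^'m"
  assumes "(F has_derivative (\<lambda>h. A *v h)) (at (x + t *\<^sub>R e))"
  shows "((\<lambda>s. F (x + s *\<^sub>R e) $ j) has_real_derivative (A *v e) $ j) (at t)"
proof -
  have l: "((\<lambda>s. x + s *\<^sub>R e) has_derivative (\<lambda>s. s *\<^sub>R e)) (at t)"
    by (auto intro!: derivative_eq_intros)
  have "((\<lambda>s. F (x + s *\<^sub>R e)) has_derivative (\<lambda>s. A *v (s *\<^sub>R e))) (at t)"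
    by (rule has_derivative_compose[OF l]) (use assms in simp)
  then have "((\<lambda>s. F (x + s *\<^sub>R e) $ j) has_derivative (\<lambda>s. (A *v (s *\<^sub>R e)) $ j)) (at t)"
    by (rule bounded_linear.has_derivative[OF bounded_linear_vec_nth])
  then show ?thesis
    by (rule has_derivative_imp_has_field_derivative) (simp add: matrix_vector_mult_def sum_distrib_left algebra_simps)
qed

locale slabpde =
  fixes v :: "real ^ 'n \<Rightarrow> real"
    and Dv :: "real ^ 'n \<Rightarrow> real ^ 'n"
    and D2v :: "real ^ 'n \<Rightarrow> real ^ 'n ^ 'n"
    and k :: 'n and \<epsilon> :: real
  assumes n2: "CARD('n) \<ge> 2"
    and eps: "\<epsilon> > 0"
    and cont_v: "continuous_on (closure (slab k \<epsilon>)) v"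
    and grad: "\<And>x. x \<in> slab k \<epsilon> \<Longrightarrow> (v has_derivative (\<lambda>h. Dv x \<bullet> h)) (at x)"
    and cont_grad: "continuous_on (closure (slab k \<epsilon>)) Dv"
    and hess: "\<And>x. x \<in> slab k \<epsilon> \<Longrightarrow> (Dv has_derivative (\<lambda>h. D2v x *v h)) (at x)"
    and cont_hess: "continuous_on (slab k \<epsilon>) D2v"
    and pde: "\<And>x. x \<in> slab k \<epsilon> \<Longrightarrow>
               (\<Sum>i\<in>UNIV. D2v x $ i $ i) - (\<Sum>i\<in>UNIV. x $ i * Dv x $ i) = R_fun x"
    and bdry: "\<And>x. x \<in> frontier (slab k \<epsilon>) \<Longrightarrow> v x = 0"
begin

abbreviation S where "S \<equiv> slab k \<epsilon>"

definition r0 where "r0 = sqrt (\<epsilon>^2 + 2 * real CARD('n))"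

lemma S_open: "open S"
  unfolding slab_def by (intro open_Collect_conj open_Collect_less continuous_intros)

lemma S_norm: "x \<in> S \<Longrightarrow> (norm x)^2 < \<epsilon>^2 + 2 * real CARD('n)"
proof -
  assume x: "x \<in> S"
  then have "(x$k)^2 < \<epsilon>^2" unfolding slab_def using eps
    using power_strict_mono[of "\<bar>x$k\<bar>" \<epsilon> 2] by simp
  then show ?thesis using x unfolding slab_def nsq_split[of x k] by simp
qed

lemma S_sub: "S \<subseteq> ball 0 r0"
proof
  fix x assume "x \<in> S"
  from S_norm[OF this] have "norm x < r0" unfolding r0_def
    by (simp add: real_less_rsqrt)
  then show "x \<in> ball 0 r0" by simp
qed

lemma cl_sub: "closure S \<subseteq> cball 0 r0"
  using S_sub closure_minimal[of S "cball 0 r0"] ball_subset_cball by blast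

lemma cl_compact: "compact (closure S)"
  using cl_sub by (simp add: compact_eq_bounded_closed bounded_subset[OF bounded_cball])

lemma zero_S: "0 \<in> S"
  unfolding slab_def using eps by simp

lemma frontier_S: "frontier S = closure S - S"
  by (simp add: frontier_def interior_open[OF S_open])

lemma Dv_zero_at_max:
  assumes "x \<in> S" "\<forall>y\<in>S. v y \<le> v x"
  shows "Dv x = 0"
proof -
  have "(\<lambda>h. Dv x \<bullet> h) = (\<lambda>h. 0)"
    using differential_zero_maxmin[OF assms(1) S_open grad[OF assms(1)]] assms(2) by blast
  then have "Dv x \<bullet> Dv x = 0" by metis
  then show ?thesis by simp
qed

lemma no_max: "x \<in> S \<Longrightarrow> \<not> (\<forall>y\<in>S. v y \<le> v x)"
proof
  assume x: "x \<in> S" and mx: "\<forall>y\<in>S. v y \<le> v x"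
  have D0: "Dv x = 0" by (rule Dv_zero_at_max[OF x mx])
  have "(\<Sum>i\<in>UNIV. D2v x $ i $ i) = R_fun x" using pde[OF x] D0 by simp
  then have "(\<Sum>i\<in>UNIV. D2v x $ i $ i) > 0" using R_pos by simp
  then obtain i where i: "D2v x $ i $ i > 0"
    by (metis (no_types, lifting) not_le sum_nonpos)
  define e :: "real^'n" where "e = axis i 1"
  obtain d0 where d0: "d0 > 0" "ball x d0 \<subseteq> S" using S_open x open_contains_ball by blast
  have inS: "x + t *\<^sub>R e \<in> S" if "\<bar>t\<bar> < d0" for t
    using that d0 unfolding e_def by (auto simp: dist_norm)
  have dphi: "((\<lambda>s. v (x + s *\<^sub>R e)) has_real_derivative Dv (x + t *\<^sub>R e) $ i) (at t)" if "\<bar>t\<bar> < d0" for t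
    using line_deriv[of v "Dv (x + t *\<^sub>R e)" x t e] grad[OF inS[OF that]]
    by (simp add: e_def inner_axis)
  have "((\<lambda>s. Dv (x + s *\<^sub>R e) $ i) has_real_derivative (D2v x *v e) $ i) (at 0)"
    using line_deriv_vec[of Dv "D2v x" x 0 e i] hess[OF x] by simp
  moreover have "(D2v x *v e) $ i = D2v x $ i $ i"
    unfolding e_def by (simp add: matrix_vector_mult_def axis_def if_distrib cong: if_cong)
  ultimately have "((\<lambda>s. Dv (x + s *\<^sub>R e) $ i) has_real_derivative D2v x $ i $ i) (at 0)" by simp
  from DERIV_pos_inc_right[OF this i] obtain d where
    d: "d > 0" "\<And>h. h > 0 \<Longrightarrow> h < d \<Longrightarrow> Dv x $ i < Dv (x + h *\<^sub>R e) $ i"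
    by auto
  define h where "h = min d d0 / 2"
  have h: "h > 0" "h < d" "h < d0" using d d0 unfolding h_def by auto
  obtain z where z: "0 < z" "z < h" "v (x + h *\<^sub>R e) - v (x + 0 *\<^sub>R e) = (h - 0) * Dv (x + z *\<^sub>R e) $ i"
    using MVT2[of 0 h "\<lambda>s. v (x + s *\<^sub>R e)" "\<lambda>t. Dv (x + t *\<^sub>R e) $ i"] h dphi by force
  have "Dv (x + z *\<^sub>R e) $ i > 0" using d(2)[of z] z h D0 by simp
  then have "h * Dv (x + z *\<^sub>R e) $ i > 0" using h(1) by simp
  then have "v (x + h *\<^sub>R e) > v x" using z by simp
  moreover have "x + h *\<^sub>R e \<in> S" using inS h by simp
  ultimately show False using mx by force
qed

lemma v_neg: "x \<in> S \<Longrightarrow> v x < 0" and v_nonpos: "x \<in> closure S \<Longrightarrow> v x \<le> 0"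
proof -
  obtain x0 where x0: "x0 \<in> closure S" "\<forall>y\<in>closure S. v y \<le> v x0"
    using continuous_attains_sup[OF cl_compact _ cont_v] zero_S closure_subset by blast
  have "x0 \<notin> S" using no_max x0 closure_subset by blast
  then have "v x0 = 0" using bdry x0 frontier_S by auto
  then have np: "\<forall>y\<in>closure S. v y \<le> 0" using x0 by simp
  then show "x \<in> closure S \<Longrightarrow> v x \<le> 0" by simp
  assume x: "x \<in> S"
  have "v x \<noteq> 0"
  proof
    assume "v x = 0"
    then have "\<forall>y\<in>S. v y \<le> v x" using np closure_subset by auto
    with no_max[OF x] show False by simp
  qed
  then show "v x < 0" using np x closure_subset by force
qed

end



definition mq :: "real \<Rightarrow> real" where "mq y = (max 0 y)^2"

lemma mq_deriv: "(mq has_real_derivative 2 * max 0 y) (at y)"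
proof (cases "y = 0")
  case True
  have "((\<lambda>h. (mq (0 + h) - mq 0) / h) \<longlongrightarrow> 0) (at 0)"
  proof (rule Lim_null_comparison)
    show "\<forall>\<^sub>F h in at 0. norm ((mq (0 + h) - mq 0) / h) \<le> norm h"
      by (intro always_eventually allI) (auto simp: mq_def power2_eq_square abs_mult divide_simps max_def)
    show "((\<lambda>h. norm h) \<longlongrightarrow> 0) (at (0::real))"
      by (intro tendsto_eq_intros) auto
  qed
  then show ?thesis using True by (simp add: DERIV_def)
next
  case False
  show ?thesis
  proof (cases "y > 0")
    case True
    have "((\<lambda>z. z^2) has_real_derivative 2 * y) (at y)"
      by (auto intro!: derivative_eq_intros)
    moreover have "\<forall>\<^sub>F z in nhds y. z^2 = mq z"
      using eventually_nhds_in_open[of "{0<..}" y] True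
      by (auto elim!: eventually_mono simp: mq_def)
    ultimately show ?thesis using True
      by (subst DERIV_cong_ev[symmetric, where f="\<lambda>z. z^2"]) auto
  next
    case False
    with \<open>y \<noteq> 0\<close> have y: "y < 0" by simp
    have "((\<lambda>z. 0) has_real_derivative 0) (at y)" by simp
    moreover have "\<forall>\<^sub>F z in nhds y. 0 = mq z"
      using eventually_nhds_in_open[of "{..<0}" y] y
      by (auto elim!: eventually_mono simp: mq_def)
    ultimately show ?thesis using y
      by (subst DERIV_cong_ev[symmetric, where f="\<lambda>z. 0"]) auto
  qed
qed

definition psi :: "real \<Rightarrow> real \<Rightarrow> real" where
  "psi d s = (mq (-s - 2*d) - mq (-s - d)) / (2*d)"
definition dpsi :: "real \<Rightarrow> real \<Rightarrow> real" where
  "dpsi d s = (max 0 (-s - d) - max 0 (-s - 2*d)) / d"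

lemma psi_deriv: "d > 0 \<Longrightarrow> (psi d has_real_derivative dpsi d s) (at s)"
proof -
  assume d: "d > 0"
  have a: "((\<lambda>s. mq (-s - c)) has_real_derivative 2 * max 0 (-s - c) * (-1)) (at s)" for c
  proof -
    have "((\<lambda>s. -s - c) has_real_derivative -1) (at s)" by (auto intro!: derivative_eq_intros)
    from DERIV_chain2[OF mq_deriv this] show ?thesis by simp
  qed
  have "(psi d has_real_derivative (2 * max 0 (-s - 2*d) * (-1) - 2 * max 0 (-s - d) * (-1)) / (2*d)) (at s)"
    unfolding psi_def[abs_def] by (intro DERIV_cdivide DERIV_diff a)
  moreover have "(2 * a * (-1) - 2 * b * (-1)) / (2*d) = (b - a) / d" for a b :: real
    using d by (simp add: field_simps)
  ultimately show ?thesis unfolding dpsi_def by simp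
qed

lemma psi_cont: "d > 0 \<Longrightarrow> continuous_on A (psi d)"
  by (meson DERIV_isCont continuous_at_imp_continuous_on psi_deriv)

lemma dpsi_cont: assumes "d > 0" shows "continuous_on A (dpsi d)"
  using assms unfolding dpsi_def[abs_def] by (intro continuous_intros) auto

lemma dpsi_bounds: "d > 0 \<Longrightarrow> 0 \<le> dpsi d s \<and> dpsi d s \<le> 1"
  unfolding dpsi_def by (auto simp: max_def field_simps)

lemma dpsi_sq: "d > 0 \<Longrightarrow> (dpsi d s)^2 \<le> dpsi d s"
  using dpsi_bounds[of d s] by (simp add: power2_eq_square mult_left_le)

lemma psi_zero: "d > 0 \<Longrightarrow> s \<ge> -d \<Longrightarrow> psi d s = 0"
  unfolding psi_def mq_def by (auto simp: max_def)

lemma dpsi_one: "d > 0 \<Longrightarrow> s \<le> -2*d \<Longrightarrow> dpsi d s = 1"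
  unfolding dpsi_def by (auto simp: max_def field_simps)

lemma psi_bounds: assumes d: "d > 0" and s: "s \<le> 0" shows "s \<le> psi d s \<and> psi d s \<le> 0"
proof (cases "s \<ge> -d")
  case True then show ?thesis using psi_zero d s by simp
next
  case False
  show ?thesis
  proof (cases "s \<ge> -2*d")
    case True
    define y where "y = -s-d"
    have y: "0 < y" "y \<le> d" using False True unfolding y_def by auto
    have p: "psi d s = -(y^2)/(2*d)" unfolding psi_def mq_def y_def using True False
      by (cases "s = -2*d") (auto simp: max_def)
    have "y^2 \<le> d*y" using y by (simp add: power2_eq_square mult_right_mono)
    also have "\<dots> \<le> 2*d*(d+y)" using y d by (simp add: algebra_simps)
    finally have "y^2/(2*d) \<le> d + y" using d by (simp add: divide_simps mult.commute)
    then have "-(y^2)/(2*d) \<ge> s" unfolding y_def by simp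
    moreover have "-(y^2)/(2*d) \<le> 0" using d by simp
    ultimately show ?thesis using p by simp
  next
    case F2: False
    have "psi d s = ((-s-2*d)^2 - (-s-d)^2)/(2*d)" unfolding psi_def mq_def using F2 False
      by (simp add: max_def)
    also have "\<dots> = s + 3*d/2" using d by (simp add: field_simps power2_eq_square)
    finally show ?thesis using F2 d by simp
  qed
qed

lemma psi_abs: "d > 0 \<Longrightarrow> \<bar>psi d s\<bar> \<le> \<bar>s\<bar>"
  using psi_bounds[of d s] psi_zero[of d s] by (cases "s \<le> 0") auto

lemma gauss_line_deriv:
  fixes x :: "real^'n"
  shows "((\<lambda>t. gauss_density (x + t *\<^sub>R axis i 1)) has_real_derivative - (x $ i) * gauss_density x) (at 0)"
proof -
  define c where "c = (2 * pi) powr (- real CARD('n) / 2)"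
  have xa: "x \<bullet> axis i (1::real) = x$i" using inner_axis'[of i 1 x] by (simp add: inner_commute)
  have xa2: "axis i (1::real) \<bullet> x = x$i" using inner_axis'[of i 1 x] by simp
  have eq: "gauss_density (x + t *\<^sub>R axis i 1) = c * exp (- ((norm x)^2 + 2 * t * x$i + t^2) / 2)" for t
    unfolding gauss_density_def c_def power2_norm_eq_inner
    by (simp add: inner_add algebra_simps xa xa2 power2_eq_square)
  have "((\<lambda>t. c * exp (- ((norm x)^2 + 2 * t * x$i + t^2) / 2)) has_real_derivative
       c * (exp (- ((norm x)^2 + 2 * 0 * x$i + 0^2) / 2) * (- (2 * x$i + 2 * 0) / 2))) (at 0)"
    by (auto intro!: derivative_eq_intros)
  then show ?thesis unfolding eq by (simp add: gauss_density_def c_def mult_ac)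
qed




lemma abs_mult_le: "\<bar>a\<bar> \<le> A \<Longrightarrow> \<bar>b\<bar> \<le> B \<Longrightarrow> \<bar>a * b\<bar> \<le> A * (B::real)"
  by (simp add: abs_mult mult_mono')

lemma gauss_pos: "gauss_density x > 0"
  unfolding gauss_density_def by simp

lemma gauss_le: "gauss_density (x::real^'n) \<le> (2 * pi) powr (- real CARD('n) / 2)"
  unfolding gauss_density_def by simp

lemma gauss_cont: "continuous_on A (gauss_density :: real^'n \<Rightarrow> real)"
  unfolding gauss_density_def[abs_def] by (intro continuous_intros) auto

lemma ev_line: "r > 0 \<Longrightarrow> \<forall>\<^sub>F t in nhds 0. dist (x + t *\<^sub>R axis i (1::real)) (x::real^'n) < r"
proof -
  assume r: "r > 0"
  have "\<forall>\<^sub>F t in nhds (0::real). t \<in> ball 0 r" by (rule eventually_nhds_in_open) (use r in auto)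
  then show ?thesis by (rule eventually_mono) (simp add: dist_norm)
qed

context slabpde
begin

lemma bnd_v: "\<exists>B. \<forall>x\<in>closure S. \<bar>v x\<bar> \<le> B"
proof -
  have "compact (v ` closure S)" by (rule compact_continuous_image[OF cont_v cl_compact])
  then obtain B where "\<forall>y\<in>v ` closure S. norm y \<le> B" using compact_imp_bounded bounded_iff by metis
  then show ?thesis by auto
qed

lemma bnd_Dv: "\<exists>B. \<forall>x\<in>closure S. norm (Dv x) \<le> B"
proof -
  have "compact (Dv ` closure S)" by (rule compact_continuous_image[OF cont_grad cl_compact])
  then obtain B where "\<forall>y\<in>Dv ` closure S. norm y \<le> B" using compact_imp_bounded bounded_iff by metis
  then show ?thesis by auto
qed

lemma bnd_D2v: assumes d: "d > 0" shows "\<exists>B. \<forall>x\<in>S. v x \<le> -d \<longrightarrow> norm (D2v x) \<le> B"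
proof -
  define K where "K = closure S \<inter> v -` {..-d}"
  have "closed K" unfolding K_def by (rule continuous_closed_preimage[OF cont_v closed_closure closed_atMost])
  then have cK: "compact K" using compact_Int_closed[OF cl_compact, of K] unfolding K_def by (simp add: Int_absorb1)
  have KS: "K \<subseteq> S"
  proof
    fix x assume x: "x \<in> K"
    show "x \<in> S"
    proof (rule ccontr)
      assume "x \<notin> S"
      then have "v x = 0" using bdry x frontier_S unfolding K_def by auto
      then show False using x d unfolding K_def by auto
    qed
  qed
  have "continuous_on K D2v" using continuous_on_subset[OF cont_hess KS] .
  then have "compact (D2v ` K)" using compact_continuous_image cK by blast
  then obtain B where "\<forall>y\<in>D2v ` K. norm y \<le> B" using compact_imp_bounded bounded_iff by metis
  then show ?thesis unfolding K_def using closure_subset by auto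
qed

lemma near: assumes d: "d > 0" and x: "x \<notin> S" shows "\<exists>r>0. \<forall>y\<in>S. dist y x < r \<longrightarrow> v y > -d"
proof (cases "x \<in> closure S")
  case True
  then have v0: "v x = 0" using bdry x frontier_S by auto
  from True cont_v obtain r where "r > 0" "\<forall>y\<in>closure S. dist y x < r \<longrightarrow> dist (v y) (v x) < d"
    unfolding continuous_on_iff using d by metis
  note rr = this
  have "\<forall>y\<in>S. dist y x < r \<longrightarrow> v y > -d"
  proof (intro ballI impI)
    fix y assume y: "y \<in> S" "dist y x < r"
    then have "y \<in> closure S" using closure_subset by blast
    then have "dist (v y) (v x) < d" using rr(2) y(2) by blast
    then show "v y > -d" using v0 by (simp add: dist_real_def)
  qed
  then show ?thesis using \<open>r > 0\<close> by blast
next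
  case False
  have "open (- closure (slab k \<epsilon>))" by (intro open_Compl closed_closure)
  then obtain r where r: "r > 0" "ball x r \<subseteq> - closure (slab k \<epsilon>)"
    using False open_contains_ball by blast
  have "\<forall>y\<in>S. dist y x < r \<longrightarrow> v y > -d"
  proof (intro ballI impI)
    fix y assume y: "y \<in> S" "dist y x < r"
    then have "y \<in> ball x r" by (simp add: dist_commute)
    then have "y \<notin> closure (slab k \<epsilon>)" using r by blast
    then show "v y > -d" using y closure_subset by blast
  qed
  then show ?thesis using r by blast
qed

end



context slabpde
begin

lemma div_S:
  fixes \<Phi> \<phi> :: "real^'n \<Rightarrow> real" and i :: 'n
  assumes d: "d > 0"
    and Phic: "continuous_on S \<Phi>" and Phib: "\<And>x. x \<in> S \<Longrightarrow> \<bar>\<Phi> x\<bar> \<le> C1"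
    and phic: "continuous_on S \<phi>" and phib: "\<And>x. x \<in> S \<Longrightarrow> \<bar>\<phi> x\<bar> \<le> M"
    and der: "\<And>x. x \<in> S \<Longrightarrow>
      ((\<lambda>t. psi d (v (x + t *\<^sub>R axis i 1)) * \<Phi> (x + t *\<^sub>R axis i 1)) has_real_derivative \<phi> x) (at 0)"
  shows "integrable lborel (\<lambda>x. indicator S x * \<phi> x) \<and> integral\<^sup>L lborel (\<lambda>x. indicator S x * \<phi> x) = 0"
proof -
  obtain Bv where Bv: "\<forall>x\<in>closure S. \<bar>v x\<bar> \<le> Bv" using bnd_v by blast
  define F where "F x = indicator S x * (psi d (v x) * \<Phi> x)" for x
  define f where "f x = indicator S x * \<phi> x" for x
  have Sb: "S \<in> sets borel" using S_open by simp
  have vc: "continuous_on S v" using continuous_on_subset[OF cont_v closure_subset] .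
  have Fm: "F \<in> borel_measurable borel"
  proof -
    have "(\<lambda>x. indicator S x *\<^sub>R (psi d (v x) * \<Phi> x)) \<in> borel_measurable borel"
      by (intro borel_measurable_continuous_on_indicator Sb continuous_intros
          continuous_on_compose2[OF psi_cont[OF d] vc] Phic) auto
    then show ?thesis unfolding F_def by simp
  qed
  have fm: "f \<in> borel_measurable borel"
  proof -
    have "(\<lambda>x. indicator S x *\<^sub>R \<phi> x) \<in> borel_measurable borel"
      by (intro borel_measurable_continuous_on_indicator Sb phic)
    then show ?thesis unfolding f_def by simp
  qed
  have Fsupp: "F x = 0" if "norm x > r0" for x
  proof -
    have "x \<notin> S" using S_sub that by auto
    then show ?thesis unfolding F_def by simp
  qed
  have Bv0: "Bv \<ge> 0" using Bv zero_S closure_subset by force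
  have C10: "C1 \<ge> 0" using Phib[OF zero_S] by simp
  have M0: "M \<ge> 0" using phib[OF zero_S] by simp
  have Fb: "\<bar>F x\<bar> \<le> Bv * C1" for x
  proof (cases "x \<in> S")
    case True
    have "\<bar>psi d (v x)\<bar> \<le> Bv" using psi_abs[OF d, of "v x"] Bv True closure_subset by force
    then have "\<bar>psi d (v x) * \<Phi> x\<bar> \<le> Bv * C1" using Phib[OF True] by (rule abs_mult_le)
    then show ?thesis using True unfolding F_def by simp
  next
    case False then show ?thesis unfolding F_def using Bv0 C10 by simp
  qed
  have fb: "\<bar>f x\<bar> \<le> M" for x
    using phib[of x] M0 unfolding f_def by (cases "x \<in> S") auto
  have Fder: "((\<lambda>t. F (x + t *\<^sub>R axis i 1)) has_real_derivative f x) (at 0)" for x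
  proof (cases "x \<in> S")
    case True
    obtain r where r: "r > 0" "ball x r \<subseteq> S" using S_open True open_contains_ball by blast
    have ev: "\<forall>\<^sub>F t in nhds 0. psi d (v (x + t *\<^sub>R axis i 1)) * \<Phi> (x + t *\<^sub>R axis i 1) = F (x + t *\<^sub>R axis i 1)"
      using ev_line[OF r(1), of x i]
    proof (rule eventually_mono)
      fix t assume "dist (x + t *\<^sub>R axis i 1) x < r"
      then have "x + t *\<^sub>R axis i 1 \<in> S" using r(2) by (auto simp: dist_commute)
      then show "psi d (v (x + t *\<^sub>R axis i 1)) * \<Phi> (x + t *\<^sub>R axis i 1) = F (x + t *\<^sub>R axis i 1)"
        unfolding F_def by simp
    qed
    have "f x = \<phi> x" unfolding f_def using True by simp
    then show ?thesis using der[OF True] DERIV_cong_ev[OF refl ev refl] by simp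
  next
    case False
    obtain r where r: "r > 0" "\<forall>y\<in>S. dist y x < r \<longrightarrow> v y > -d" using near[OF d False] by blast
    have ev: "\<forall>\<^sub>F t in nhds 0. (\<lambda>t. 0) t = F (x + t *\<^sub>R axis i 1)"
      using ev_line[OF r(1), of x i]
    proof (rule eventually_mono)
      fix t assume t: "dist (x + t *\<^sub>R axis i 1) x < r"
      show "(\<lambda>t. 0) t = F (x + t *\<^sub>R axis i 1)"
      proof (cases "x + t *\<^sub>R axis i 1 \<in> S")
        case True
        then have "v (x + t *\<^sub>R axis i 1) > -d" using r t by blast
        then show ?thesis unfolding F_def using psi_zero[OF d] by simp
      next
        case False then show ?thesis unfolding F_def by simp
      qed
    qed
    have "f x = 0" unfolding f_def using False by simp
    moreover have "((\<lambda>t. 0) has_real_derivative 0) (at 0)" by simp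
    ultimately show ?thesis using DERIV_cong_ev[OF refl ev refl] by simp
  qed
  have "integrable lborel f \<and> integral\<^sup>L lborel f = 0"
    by (rule div_zero[OF Fm fm Fsupp Fb Fder fb])
  then show ?thesis unfolding f_def by simp
qed

end



lemma inner_ax: "(x::real^'n) \<bullet> axis i (1::real) = x $ i"
  using inner_axis'[of i 1 x] by (simp add: inner_commute)

lemma mv_axis: "((A::real^'n^'m) *v axis i (1::real)) $ j = A $ j $ i"
  by (simp add: matrix_vector_mult_def axis_def if_distrib cong: if_cong)

context slabpde
begin

lemma vline: "x \<in> S \<Longrightarrow> ((\<lambda>t. v (x + t *\<^sub>R axis i 1)) has_real_derivative Dv x $ i) (at 0)"
  using line_deriv[of v "Dv x" x 0 "axis i 1"] grad[of x] by (simp add: inner_ax)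

lemma Dvline: "x \<in> S \<Longrightarrow> ((\<lambda>t. Dv (x + t *\<^sub>R axis i 1) $ j) has_real_derivative D2v x $ j $ i) (at 0)"
  using line_deriv_vec[of Dv "D2v x" x 0 "axis i 1" j] hess[of x] by (simp add: mv_axis)

lemma uline: "d > 0 \<Longrightarrow> x \<in> S \<Longrightarrow>
  ((\<lambda>t. psi d (v (x + t *\<^sub>R axis i 1))) has_real_derivative dpsi d (v x) * Dv x $ i) (at 0)"
  using DERIV_chain2[OF psi_deriv vline, of d x i] by simp

lemma vcS: "continuous_on S v" using continuous_on_subset[OF cont_v closure_subset] .
lemma DvcS: "continuous_on S Dv" using continuous_on_subset[OF cont_grad closure_subset] .

lemma id1:
  assumes d: "d > 0"
  shows "integrable lborel (\<lambda>x. indicator S x * (gauss_density x * (dpsi d (v x) * (norm (Dv x))^2 + psi d (v x) * R_fun x)))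
    \<and> integral\<^sup>L lborel (\<lambda>x. indicator S x * (gauss_density x * (dpsi d (v x) * (norm (Dv x))^2 + psi d (v x) * R_fun x))) = 0"
proof -
  obtain Bv where Bv: "\<forall>x\<in>closure S. \<bar>v x\<bar> \<le> Bv" using bnd_v by blast
  obtain BD where BD: "\<forall>x\<in>closure S. norm (Dv x) \<le> BD" using bnd_Dv by blast
  obtain BH0 where BH0: "\<forall>x\<in>S. v x \<le> -d \<longrightarrow> norm (D2v x) \<le> BH0" using bnd_D2v[OF d] by blast
  define BH where "BH = max BH0 0"
  have BH: "\<forall>x\<in>S. v x \<le> -d \<longrightarrow> norm (D2v x) \<le> BH" using BH0 unfolding BH_def by force
  have BH0': "BH \<ge> 0" unfolding BH_def by simp
  have Bv0: "Bv \<ge> 0" using Bv zero_S closure_subset by force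
  have BD0: "BD \<ge> 0" using BD zero_S closure_subset norm_ge_zero order_trans by blast
  have r00: "r0 \<ge> 0" unfolding r0_def by simp
  define cg where "cg = (2 * pi) powr (- real CARD('n) / 2)"
  have gle: "\<bar>gauss_density x\<bar> \<le> cg" for x :: "real^'n" using gauss_le[of x] gauss_pos[of x] unfolding cg_def by simp
  have cg0: "cg \<ge> 0" unfolding cg_def by simp
  define \<phi> where "\<phi> i x = dpsi d (v x) * Dv x $ i * (gauss_density x * Dv x $ i) +
     psi d (v x) * (gauss_density x * D2v x $ i $ i - x $ i * gauss_density x * Dv x $ i)" for i x
  have each: "integrable lborel (\<lambda>x. indicator S x * \<phi> i x) \<and> integral\<^sup>L lborel (\<lambda>x. indicator S x * \<phi> i x) = 0" for i
  proof -
    have Phic: "continuous_on S (\<lambda>x. gauss_density x * Dv x $ i)"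
      by (intro continuous_intros gauss_cont DvcS)
    have phic: "continuous_on S (\<phi> i)" unfolding \<phi>_def
      by (intro continuous_intros gauss_cont DvcS cont_hess continuous_on_compose2[OF psi_cont[OF d] vcS]
          continuous_on_compose2[OF dpsi_cont[OF d] vcS]) auto
    have Dvi: "\<bar>Dv x $ i\<bar> \<le> BD" if x: "x \<in> S" for x
    proof -
      have xc: "x \<in> closure S" using x closure_subset by blast
      then show ?thesis using BD component_le_norm_cart[of "Dv x" i] by force
    qed
    have Phib: "\<bar>gauss_density x * Dv x $ i\<bar> \<le> cg * BD" if x: "x \<in> S" for x
      by (rule abs_mult_le[OF gle Dvi[OF x]])
    have phib: "\<bar>\<phi> i x\<bar> \<le> 1 * BD * (cg * BD) + Bv * (cg * BH + r0 * cg * BD)" if x: "x \<in> S" for x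
    proof -
      have xc: "x \<in> closure S" using x closure_subset by blast
      have t1: "\<bar>dpsi d (v x) * Dv x $ i * (gauss_density x * Dv x $ i)\<bar> \<le> 1 * BD * (cg * BD)"
        using dpsi_bounds[OF d, of "v x"] by (intro abs_mult_le Dvi[OF x] gle) auto
      have t2: "\<bar>psi d (v x) * (gauss_density x * D2v x $ i $ i - x $ i * gauss_density x * Dv x $ i)\<bar>
          \<le> Bv * (cg * BH + r0 * cg * BD)"
      proof (cases "v x \<le> -d")
        case True
        have H: "\<bar>D2v x $ i $ i\<bar> \<le> BH" using BH x True Finite_Cartesian_Product.norm_nth_le[of "D2v x" i]
            component_le_norm_cart[of "D2v x $ i" i] by force
        have xi: "\<bar>x $ i\<bar> \<le> r0" using S_sub x component_le_norm_cart[of x i] by force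
        have "\<bar>gauss_density x * D2v x $ i $ i - x $ i * gauss_density x * Dv x $ i\<bar> \<le> cg * BH + r0 * cg * BD"
          using abs_mult_le[OF gle[of x] H] abs_mult_le[OF abs_mult_le[OF xi gle[of x]] Dvi[OF x]] by linarith
        moreover have "\<bar>psi d (v x)\<bar> \<le> Bv" using psi_abs[OF d, of "v x"] Bv xc by force
        ultimately show ?thesis by (intro abs_mult_le)
      next
        case False
        then have "psi d (v x) = 0" using psi_zero[OF d] by simp
        moreover have "0 \<le> Bv * (cg * BH + r0 * cg * BD)" using Bv0 cg0 BH0' r00 BD0 by simp
        ultimately show ?thesis by simp
      qed
      show ?thesis unfolding \<phi>_def using t1 t2 by linarith
    qed
    have der: "((\<lambda>t. psi d (v (x + t *\<^sub>R axis i 1)) *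
        (gauss_density (x + t *\<^sub>R axis i 1) * Dv (x + t *\<^sub>R axis i 1) $ i)) has_real_derivative \<phi> i x) (at 0)"
      if x: "x \<in> S" for x
    proof -
      have D: "((\<lambda>t. psi d (v (x + t *\<^sub>R axis i 1)) *
          (gauss_density (x + t *\<^sub>R axis i 1) * Dv (x + t *\<^sub>R axis i 1) $ i)) has_real_derivative
          dpsi d (v x) * Dv x $ i * (gauss_density (x + 0 *\<^sub>R axis i 1) * Dv (x + 0 *\<^sub>R axis i 1) $ i) +
          (- (x $ i) * gauss_density x * Dv (x + 0 *\<^sub>R axis i 1) $ i + D2v x $ i $ i * gauss_density (x + 0 *\<^sub>R axis i 1))
            * psi d (v (x + 0 *\<^sub>R axis i 1))) (at 0)"
        by (intro DERIV_mult uline[OF d x] gauss_line_deriv Dvline[OF x])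
      show ?thesis
        by (rule DERIV_cong[OF D]) (simp add: \<phi>_def algebra_simps)
    qed
    show ?thesis by (rule div_S[OF d Phic Phib phic phib der])
  qed
  have int: "integrable lborel (\<lambda>x. \<Sum>i\<in>UNIV. indicator S x * \<phi> i x)"
    using Bochner_Integration.integrable_sum[where M=lborel and I=UNIV and f="\<lambda>i x. indicator S x * \<phi> i x"] each by blast
  have "integral\<^sup>L lborel (\<lambda>x. \<Sum>i\<in>UNIV. indicator S x * \<phi> i x) = (\<Sum>i\<in>UNIV. integral\<^sup>L lborel (\<lambda>x. indicator S x * \<phi> i x))"
    using Bochner_Integration.integral_sum[where M=lborel and I=UNIV and f="\<lambda>i x. indicator S x * \<phi> i x"] each by blast
  also have "\<dots> = 0" using each by simp
  finally have I0: "integral\<^sup>L lborel (\<lambda>x. \<Sum>i\<in>UNIV. indicator S x * \<phi> i x) = 0" .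
  have eq: "(\<lambda>x. \<Sum>i\<in>UNIV. indicator S x * \<phi> i x) =
     (\<lambda>x. indicator S x * (gauss_density x * (dpsi d (v x) * (norm (Dv x))^2 + psi d (v x) * R_fun x)))"
  proof
    fix x
    show "(\<Sum>i\<in>UNIV. indicator S x * \<phi> i x) =
       indicator S x * (gauss_density x * (dpsi d (v x) * (norm (Dv x))^2 + psi d (v x) * R_fun x))"
    proof (cases "x \<in> S")
      case True
      have "(\<Sum>i\<in>UNIV. \<phi> i x) = dpsi d (v x) * gauss_density x * (\<Sum>i\<in>UNIV. (Dv x $ i)^2) +
         psi d (v x) * gauss_density x * ((\<Sum>i\<in>UNIV. D2v x $ i $ i) - (\<Sum>i\<in>UNIV. x $ i * Dv x $ i))"
        unfolding \<phi>_def by (simp add: sum.distrib sum_subtractf sum_distrib_left algebra_simps power2_eq_square)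
      then show ?thesis using True pde[OF True] nsq[of "Dv x"] by (simp add: algebra_simps)
    next
      case False then show ?thesis by simp
    qed
  qed
  show ?thesis using int I0 unfolding eq by simp
qed

end



definition Hf :: "'n \<Rightarrow> real^'n \<Rightarrow> real" where
  "Hf k x = gauss_density x * exp ((x $ k)^2 / 2)"

lemma nline: "(norm (x + t *\<^sub>R axis i (1::real)))^2 = (norm (x::real^'n))^2 + 2 * t * x $ i + t^2"
proof -
  have xa2: "axis i (1::real) \<bullet> x = x$i" using inner_axis'[of i 1 x] by simp
  show ?thesis unfolding power2_norm_eq_inner
    by (simp add: inner_add xa2 inner_ax algebra_simps power2_eq_square)
qed

lemma H_line: "Hf k (x + t *\<^sub>R axis k 1) = Hf k x"
proof -
  have "-((norm (x + t *\<^sub>R axis k 1))^2) / 2 + ((x + t *\<^sub>R axis k 1) $ k)^2 / 2 = -((norm x)^2) / 2 + (x $ k)^2/2"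
    unfolding nline by (simp add: field_simps power2_eq_square)
  then show ?thesis unfolding Hf_def gauss_density_def by (simp add: exp_add[symmetric] algebra_simps)
qed

lemma H_pos: "Hf k x > 0" unfolding Hf_def by (simp add: gauss_pos)

lemma H_le: "Hf k (x::real^'n) \<le> (2 * pi) powr (- real CARD('n) / 2)"
proof -
  have "-((norm x)^2) / 2 + (x $ k)^2/2 \<le> 0" using nsq_split[of x k] sum_nonneg[of "UNIV - {k}" "\<lambda>i. (x$i)^2"] by (simp add: field_simps)
  then have "exp (-((norm x)^2) / 2 + (x $ k)^2/2) \<le> 1" by simp
  then show ?thesis unfolding Hf_def gauss_density_def
    by (simp add: mult.assoc exp_add[symmetric] mult_left_le)
qed

lemma H_ge: "Hf k x \<ge> gauss_density x" unfolding Hf_def using gauss_pos[of x] by simp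

lemma H_cont: "continuous_on A (Hf k)"
  unfolding Hf_def[abs_def] by (intro continuous_intros gauss_cont) auto

context slabpde
begin

lemma id2:
  assumes d: "d > 0"
  shows "integrable lborel (\<lambda>x. indicator S x * ((psi d (v x))^2 * Hf k x + 2 * x $ k * psi d (v x) * dpsi d (v x) * Dv x $ k * Hf k x))
    \<and> integral\<^sup>L lborel (\<lambda>x. indicator S x * ((psi d (v x))^2 * Hf k x + 2 * x $ k * psi d (v x) * dpsi d (v x) * Dv x $ k * Hf k x)) = 0"
proof -
  obtain Bv where Bv: "\<forall>x\<in>closure S. \<bar>v x\<bar> \<le> Bv" using bnd_v by blast
  obtain BD where BD: "\<forall>x\<in>closure S. norm (Dv x) \<le> BD" using bnd_Dv by blast
  define cg where "cg = (2 * pi) powr (- real CARD('n) / 2)"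
  have Hle: "\<bar>Hf k x\<bar> \<le> cg" for x :: "real^'n" using H_le[of k x] H_pos[of k x] unfolding cg_def by simp
  define \<phi> where "\<phi> x = (psi d (v x))^2 * Hf k x + 2 * x $ k * psi d (v x) * dpsi d (v x) * Dv x $ k * Hf k x" for x
  define \<Phi> where "\<Phi> x = x $ k * psi d (v x) * Hf k x" for x
  have Phic: "continuous_on S \<Phi>" unfolding \<Phi>_def
    by (intro continuous_intros H_cont continuous_on_compose2[OF psi_cont[OF d] vcS]) auto
  have phic: "continuous_on S \<phi>" unfolding \<phi>_def
    by (intro continuous_intros H_cont DvcS continuous_on_compose2[OF psi_cont[OF d] vcS]
          continuous_on_compose2[OF dpsi_cont[OF d] vcS]) auto
  have Dvk: "\<bar>Dv x $ k\<bar> \<le> BD" if x: "x \<in> S" for x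
  proof -
    have xc: "x \<in> closure S" using x closure_subset by blast
    then show ?thesis using BD component_le_norm_cart[of "Dv x" k] by force
  qed
  have xk: "\<bar>x $ k\<bar> \<le> r0" if x: "x \<in> S" for x using S_sub x component_le_norm_cart[of x k] by force
  have ps: "\<bar>psi d (v x)\<bar> \<le> Bv" if x: "x \<in> S" for x
    using psi_abs[OF d, of "v x"] Bv x closure_subset by force
  have dps: "\<bar>dpsi d (v x)\<bar> \<le> 1" for x using dpsi_bounds[OF d, of "v x"] by simp
  have Phib: "\<bar>\<Phi> x\<bar> \<le> r0 * Bv * cg" if x: "x \<in> S" for x
    unfolding \<Phi>_def by (intro abs_mult_le xk[OF x] ps[OF x] Hle)
  have phib: "\<bar>\<phi> x\<bar> \<le> Bv * Bv * cg + 2 * r0 * Bv * 1 * BD * cg" if x: "x \<in> S" for x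
  proof -
    have "\<bar>(psi d (v x))^2 * Hf k x\<bar> \<le> Bv * Bv * cg" unfolding power2_eq_square
      by (intro abs_mult_le ps[OF x] Hle)
    moreover have "\<bar>2 * x $ k * psi d (v x) * dpsi d (v x) * Dv x $ k * Hf k x\<bar> \<le> 2 * r0 * Bv * 1 * BD * cg"
      by (intro abs_mult_le ps[OF x] Hle xk[OF x] Dvk[OF x] dps) simp
    ultimately show ?thesis unfolding \<phi>_def by linarith
  qed
  have der: "((\<lambda>t. psi d (v (x + t *\<^sub>R axis k 1)) * \<Phi> (x + t *\<^sub>R axis k 1)) has_real_derivative \<phi> x) (at 0)"
    if x: "x \<in> S" for x
  proof -
    have eqf: "(\<lambda>t. psi d (v (x + t *\<^sub>R axis k 1)) * \<Phi> (x + t *\<^sub>R axis k 1)) =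
      (\<lambda>t. psi d (v (x + t *\<^sub>R axis k 1)) * (((x $ k + t) * psi d (v (x + t *\<^sub>R axis k 1))) * Hf k x))"
      unfolding \<Phi>_def by (rule ext) (simp add: H_line)
    have l: "((\<lambda>t. x $ k + t) has_real_derivative 1) (at 0)" by (auto intro!: derivative_eq_intros)
    have D: "((\<lambda>t. psi d (v (x + t *\<^sub>R axis k 1)) * (((x $ k + t) * psi d (v (x + t *\<^sub>R axis k 1))) * Hf k x))
       has_real_derivative
       dpsi d (v x) * Dv x $ k * (((x $ k + 0) * psi d (v (x + 0 *\<^sub>R axis k 1))) * Hf k x) +
       ((1 * psi d (v (x + 0 *\<^sub>R axis k 1)) + dpsi d (v x) * Dv x $ k * (x $ k + 0)) * Hf k x + 0 * ((x $ k + 0) * psi d (v (x + 0 *\<^sub>R axis k 1))))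
        * psi d (v (x + 0 *\<^sub>R axis k 1))) (at 0)"
      by (intro DERIV_mult uline[OF d x] l DERIV_const)
    show ?thesis unfolding eqf
      by (rule DERIV_cong[OF D]) (simp add: \<phi>_def algebra_simps power2_eq_square)
  qed
  show ?thesis using div_S[OF d Phic Phib phic phib der] unfolding \<phi>_def by simp
qed

end



lemma key_pw:
  fixes g H u p w Dk xk R B e :: real
  assumes g: "g > 0" and Hg: "H \<ge> g" and Hu: "H \<le> g * exp (e^2/2)"
    and p: "0 \<le> p" "p \<le> 1" and u: "u \<le> 0" and R: "0 < R" "R \<le> 2"
    and Dk: "Dk^2 \<le> w" and xk: "xk^2 \<le> e^2" and B: "B = 4 * e^2 * exp (e^2/2)" and e: "e > 0"
  shows "g*(p*w) \<le> g*(p*w + u*R) + (u^2*H + 2*xk*u*p*Dk*H)/B + (g*(p*w))/2 + 2*B*g"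
proof -
  have Bp: "B > 0" using B e by simp
  have H0: "H > 0" using g Hg by simp
  have w0: "w \<ge> 0" using Dk by (meson order_trans zero_le_power2)
  have "-u*R \<le> -u*2" using u R by (intro mult_left_mono) auto
  moreover have "(u + 2*B)^2/(2*B) \<ge> 0" using Bp by simp
  moreover have "(u + 2*B)^2/(2*B) = u^2/(2*B) + 2*u + 2*B" using Bp
    by (simp add: field_simps power2_eq_square)
  ultimately have s1: "-u*R \<le> u^2/(2*B) + 2*B" by linarith
  have s1g: "-(g*u*R) \<le> g*(u^2/(2*B)) + 2*B*g"
    using mult_left_mono[OF s1, of g] g by (simp add: algebra_simps)
  have s2: "g*(u^2/(2*B)) \<le> H*(u^2/(2*B))" using Hg Bp by (intro mult_right_mono) auto
  define a where "a = xk*p*Dk"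
  have "(u + 2*a)^2 \<ge> 0" by simp
  then have s3: "-(2*u*a) \<le> u^2/2 + 2*a^2" by (simp add: power2_eq_square algebra_simps)
  have "a^2 = xk^2 * p^2 * Dk^2" unfolding a_def by (simp add: power_mult_distrib)
  also have "\<dots> \<le> e^2 * p * w"
  proof -
    have "p^2 \<le> p" using p by (simp add: power2_eq_square mult_left_le)
    then have "p^2 * Dk^2 \<le> p * w" using Dk p by (intro mult_mono) auto
    then have "xk^2 * (p^2 * Dk^2) \<le> e^2 * (p * w)"
      by (rule mult_mono[OF xk]) (use p w0 in auto)
    then show ?thesis by (simp add: mult.assoc)
  qed
  finally have s4: "a^2 \<le> e^2 * p * w" .
  have s5: "-(2*u*a)*H \<le> (u^2/2 + 2*(e^2*p*w))*H"
    using s3 s4 H0 by (intro mult_right_mono) auto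
  have s6: "2*(e^2*p*w)*H \<le> (B/2)*(g*(p*w))"
  proof -
    have "2*(e^2*p*w)*H \<le> 2*(e^2*p*w)*(g * exp (e^2/2))"
      using Hu p w0 by (intro mult_left_mono) auto
    also have "\<dots> = (B/2)*(g*(p*w))" unfolding B by (simp add: algebra_simps)
    finally show ?thesis .
  qed
  have s7: "u^2*H/2 \<le> (u^2*H + 2*xk*u*p*Dk*H) + (B/2)*(g*(p*w))"
    using s5 s6 unfolding a_def by (simp add: algebra_simps)
  have s8: "H*(u^2/(2*B)) \<le> (u^2*H + 2*xk*u*p*Dk*H)/B + (g*(p*w))/2"
  proof -
    have "H*(u^2/(2*B)) = (u^2*H/2)/B" using Bp by (simp add: field_simps)
    also have "\<dots> \<le> ((u^2*H + 2*xk*u*p*Dk*H) + (B/2)*(g*(p*w)))/B"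
      using s7 Bp by (intro divide_right_mono) auto
    also have "\<dots> = (u^2*H + 2*xk*u*p*Dk*H)/B + (g*(p*w))/2" using Bp by (simp add: field_simps)
    finally show ?thesis .
  qed
  show ?thesis using s1g s2 s8 by (simp add: algebra_simps)
qed




context slabpde
begin

lemma Ebound:
  assumes d: "d > 0"
  shows "integral\<^sup>L lborel (\<lambda>x. indicator S x * (gauss_density x * (dpsi d (v x) * (norm (Dv x))^2)))
    \<le> 4 * (4 * \<epsilon>^2 * exp (\<epsilon>^2/2)) * integral\<^sup>L lborel (\<lambda>x. indicator S x * gauss_density x)"
proof -
  define B where "B = 4 * \<epsilon>^2 * exp (\<epsilon>^2/2)"
  have Bp: "B > 0" unfolding B_def using eps by simp
  define Ef where "Ef x = indicator S x * (gauss_density x * (dpsi d (v x) * (norm (Dv x))^2))" for x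
  define Gf where "Gf x = indicator S x * gauss_density x" for x
  define I1 where "I1 x = indicator S x * (gauss_density x * (dpsi d (v x) * (norm (Dv x))^2 + psi d (v x) * R_fun x))" for x
  define I2 where "I2 x = indicator S x * ((psi d (v x))^2 * Hf k x + 2 * x $ k * psi d (v x) * dpsi d (v x) * Dv x $ k * Hf k x)" for x
  have i1: "integrable lborel I1" "integral\<^sup>L lborel I1 = 0" using id1[OF d] unfolding I1_def by auto
  have i2: "integrable lborel I2" "integral\<^sup>L lborel I2 = 0" using id2[OF d] unfolding I2_def by auto
  have Sb: "S \<in> sets borel" using S_open by simp
  obtain BD where BD: "\<forall>x\<in>closure S. norm (Dv x) \<le> BD" using bnd_Dv by blast
  define cg where "cg = (2 * pi) powr (- real CARD('n) / 2)"
  have gle: "\<bar>gauss_density x\<bar> \<le> cg" for x :: "real^'n" using gauss_le[of x] gauss_pos[of x] unfolding cg_def by simp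
  have supp: "norm x > r0 \<Longrightarrow> x \<notin> S" for x using S_sub by auto
  have Gint: "integrable lborel Gf"
  proof (rule bsupp_integrable[where C=cg and R=r0])
    have "(\<lambda>x. indicator S x *\<^sub>R gauss_density x) \<in> borel_measurable borel"
      by (intro borel_measurable_continuous_on_indicator Sb gauss_cont)
    then show "Gf \<in> borel_measurable borel" unfolding Gf_def by simp
    show "\<bar>Gf x\<bar> \<le> cg" for x using gle[of x] unfolding Gf_def cg_def by (cases "x \<in> S") auto
    show "norm x > r0 \<Longrightarrow> Gf x = 0" for x using supp unfolding Gf_def by simp
  qed
  have Eint: "integrable lborel Ef"
  proof (rule bsupp_integrable[where C="cg * (1 * BD^2)" and R=r0])
    have "(\<lambda>x. indicator S x *\<^sub>R (gauss_density x * (dpsi d (v x) * (norm (Dv x))^2))) \<in> borel_measurable borel"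
      by (intro borel_measurable_continuous_on_indicator Sb gauss_cont continuous_intros DvcS
          continuous_on_compose2[OF dpsi_cont[OF d] vcS]) auto
    then show "Ef \<in> borel_measurable borel" unfolding Ef_def by simp
    show "\<bar>Ef x\<bar> \<le> cg * (1 * BD^2)" for x
    proof (cases "x \<in> S")
      case True
      have "norm (Dv x) \<le> BD" using BD True closure_subset by blast
      then have "\<bar>(norm (Dv x))^2\<bar> \<le> BD^2" by (simp add: power_mono)
      then have "\<bar>gauss_density x * (dpsi d (v x) * (norm (Dv x))^2)\<bar> \<le> cg * (1 * BD^2)"
        using dpsi_bounds[OF d, of "v x"] by (intro abs_mult_le gle) auto
      then show ?thesis using True unfolding Ef_def by simp
    next
      case False then show ?thesis unfolding Ef_def cg_def by simp
    qed
    show "norm x > r0 \<Longrightarrow> Ef x = 0" for x using supp unfolding Ef_def by simp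
  qed
  have pw: "Ef x \<le> I1 x + I2 x / B + Ef x / 2 + 2 * B * Gf x" for x
  proof (cases "x \<in> S")
    case False then show ?thesis unfolding Ef_def I1_def I2_def Gf_def by simp
  next
    case True
    have xk: "(x $ k)^2 \<le> \<epsilon>^2" using True eps unfolding slab_def
      by (simp add: abs_le_square_iff[symmetric])
    have Hu: "Hf k x \<le> gauss_density x * exp (\<epsilon>^2/2)"
      unfolding Hf_def using xk gauss_pos[of x] by (intro mult_left_mono) auto
    have u: "psi d (v x) \<le> 0" using psi_bounds[OF d, of "v x"] v_neg[OF True] by simp
    have Dk: "(Dv x $ k)^2 \<le> (norm (Dv x))^2"
      using component_le_norm_cart[of "Dv x" k] by (simp add: abs_le_square_iff[symmetric])
    have "gauss_density x * (dpsi d (v x) * (norm (Dv x))^2) \<le>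
      gauss_density x * (dpsi d (v x) * (norm (Dv x))^2 + psi d (v x) * R_fun x) +
      ((psi d (v x))^2 * Hf k x + 2 * x $ k * psi d (v x) * dpsi d (v x) * Dv x $ k * Hf k x) / B +
      (gauss_density x * (dpsi d (v x) * (norm (Dv x))^2)) / 2 + 2 * B * gauss_density x"
      by (rule key_pw[OF gauss_pos H_ge Hu _ _ u R_pos R_le2 Dk xk B_def eps])
        (use dpsi_bounds[OF d, of "v x"] in auto)
    then show ?thesis using True unfolding Ef_def I1_def I2_def Gf_def by simp
  qed
  have rint: "integrable lborel (\<lambda>x. I1 x + I2 x / B + Ef x / 2 + 2 * B * Gf x)"
    using i1 i2 Eint Gint by auto
  have "integral\<^sup>L lborel Ef \<le> integral\<^sup>L lborel (\<lambda>x. I1 x + I2 x / B + Ef x / 2 + 2 * B * Gf x)"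
    by (rule integral_mono[OF Eint rint pw])
  also have "\<dots> = integral\<^sup>L lborel I1 + integral\<^sup>L lborel I2 / B + integral\<^sup>L lborel Ef / 2 + 2 * B * integral\<^sup>L lborel Gf"
    using i1 i2 Eint Gint by simp
  finally have "integral\<^sup>L lborel Ef \<le> integral\<^sup>L lborel Ef / 2 + 2 * B * integral\<^sup>L lborel Gf"
    using i1 i2 by simp
  then show ?thesis unfolding Ef_def Gf_def B_def by simp
qed

end



context slabpde
begin

lemma Gint: "integrable lborel (\<lambda>x. indicator S x * gauss_density x)"
proof (rule bsupp_integrable[where C="(2 * pi) powr (- real CARD('n) / 2)" and R=r0])
  have Sb: "S \<in> sets borel" using S_open by simp
  have "(\<lambda>x. indicator S x *\<^sub>R gauss_density x) \<in> borel_measurable borel"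
    by (intro borel_measurable_continuous_on_indicator Sb gauss_cont)
  then show "(\<lambda>x. indicator S x * gauss_density x) \<in> borel_measurable borel" by simp
  show "\<bar>indicator S x * gauss_density x\<bar> \<le> (2 * pi) powr (- real CARD('n) / 2)" for x
    using gauss_le[of x] gauss_pos[of x] by (cases "x \<in> S") auto
  show "norm x > r0 \<Longrightarrow> indicator S x * gauss_density x = 0" for x
  proof -
    assume "norm x > r0" then have "x \<notin> S" using S_sub by auto
    then show ?thesis by simp
  qed
qed

lemma Fmeas: "(\<lambda>x. indicator S x * (norm (Dv x))^2) \<in> borel_measurable borel"
proof -
  have Sb: "S \<in> sets borel" using S_open by simp
  have "(\<lambda>x. indicator S x *\<^sub>R (norm (Dv x))^2) \<in> borel_measurable borel"
    by (intro borel_measurable_continuous_on_indicator Sb continuous_intros DvcS)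
  then show ?thesis by simp
qed

lemma Fint: "integrable lborel (\<lambda>x. indicator S x * (gauss_density x * (norm (Dv x))^2))"
proof -
  obtain BD where BD: "\<forall>x\<in>closure S. norm (Dv x) \<le> BD" using bnd_Dv by blast
  define cg where "cg = (2 * pi) powr (- real CARD('n) / 2)"
  have gle: "\<bar>gauss_density x\<bar> \<le> cg" for x :: "real^'n" using gauss_le[of x] gauss_pos[of x] unfolding cg_def by simp
  show ?thesis
  proof (rule bsupp_integrable[where C="cg * BD^2" and R=r0])
    have Sb: "S \<in> sets borel" using S_open by simp
    have "(\<lambda>x. indicator S x *\<^sub>R (gauss_density x * (norm (Dv x))^2)) \<in> borel_measurable borel"
      by (intro borel_measurable_continuous_on_indicator Sb gauss_cont continuous_intros DvcS)
    then show "(\<lambda>x. indicator S x * (gauss_density x * (norm (Dv x))^2)) \<in> borel_measurable borel" by simp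
    show "\<bar>indicator S x * (gauss_density x * (norm (Dv x))^2)\<bar> \<le> cg * BD^2" for x
    proof (cases "x \<in> S")
      case True
      have "norm (Dv x) \<le> BD" using BD True closure_subset by blast
      then have "\<bar>(norm (Dv x))^2\<bar> \<le> BD^2" by (simp add: power_mono)
      then show ?thesis using True by (simp add: abs_mult_le[OF gle])
    next
      case False then show ?thesis unfolding cg_def by simp
    qed
    show "norm x > r0 \<Longrightarrow> indicator S x * (gauss_density x * (norm (Dv x))^2) = 0" for x
    proof -
      assume "norm x > r0" then have "x \<notin> S" using S_sub by auto
      then show ?thesis by simp
    qed
  qed
qed

lemma Efinal:
  "integral\<^sup>L lborel (\<lambda>x. indicator S x * (gauss_density x * (norm (Dv x))^2))
    \<le> 4 * (4 * \<epsilon>^2 * exp (\<epsilon>^2/2)) * integral\<^sup>L lborel (\<lambda>x. indicator S x * gauss_density x)"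
proof -
  define h where "h m = inverse (real (Suc m))" for m
  have hp: "h m > 0" for m unfolding h_def by simp
  define s where "s m x = indicator S x * (gauss_density x * (dpsi (h m) (v x) * (norm (Dv x))^2))" for m x
  define f where "f x = indicator S x * (gauss_density x * (norm (Dv x))^2)" for x
  have Sb: "S \<in> sets borel" using S_open by simp
  have sm: "s m \<in> borel_measurable borel" for m
  proof -
    have "(\<lambda>x. indicator S x *\<^sub>R (gauss_density x * (dpsi (h m) (v x) * (norm (Dv x))^2))) \<in> borel_measurable borel"
      by (intro borel_measurable_continuous_on_indicator Sb gauss_cont continuous_intros DvcS
          continuous_on_compose2[OF dpsi_cont[OF hp] vcS]) auto
    then show ?thesis unfolding s_def by simp
  qed
  have fint: "integrable lborel f" using Fint unfolding f_def .
  have fm: "f \<in> borel_measurable borel" using borel_measurable_integrable[OF fint] by simp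
  have bnd: "\<bar>s m x\<bar> \<le> f x" for m x
  proof (cases "x \<in> S")
    case True
    have "0 \<le> dpsi (h m) (v x)" "dpsi (h m) (v x) \<le> 1" using dpsi_bounds[OF hp] by auto
    moreover have "gauss_density x > 0" by (rule gauss_pos)
    ultimately show ?thesis using True unfolding s_def f_def
      by (simp add: abs_mult mult_left_le mult_left_le_one_le)
  next
    case False then show ?thesis unfolding s_def f_def by simp
  qed
  have lim: "(\<lambda>m. s m x) \<longlonglongrightarrow> f x" for x
  proof (cases "x \<in> S")
    case True
    have vx: "- v x / 2 > 0" using v_neg[OF True] by simp
    obtain N where N: "inverse (real (Suc N)) < - v x / 2" using reals_Archimedean[OF vx] by blast
    have "\<forall>\<^sub>F m in sequentially. s m x = f x"
      unfolding eventually_sequentially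
    proof (intro exI allI impI)
      fix m assume "N \<le> m"
      then have "h m \<le> inverse (real (Suc N))" unfolding h_def by (simp add: le_imp_inverse_le)
      then have "v x \<le> - 2 * h m" using N by simp
      then have "dpsi (h m) (v x) = 1" using dpsi_one[OF hp] by simp
      then show "s m x = f x" unfolding s_def f_def by simp
    qed
    then show ?thesis by (rule tendsto_eventually)
  next
    case False then show ?thesis unfolding s_def f_def by simp
  qed
  have "(\<lambda>m. integral\<^sup>L lborel (s m)) \<longlonglongrightarrow> integral\<^sup>L lborel f"
    by (rule integral_dominated_convergence[where w=f]) (auto simp: fm sm fint lim bnd intro!: AE_I2)
  moreover have "\<forall>m\<ge>0. integral\<^sup>L lborel (s m) \<le> 4 * (4 * \<epsilon>^2 * exp (\<epsilon>^2/2)) * integral\<^sup>L lborel (\<lambda>x. indicator S x * gauss_density x)"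
    using Ebound[OF hp] unfolding s_def by blast
  ultimately show ?thesis unfolding f_def by (intro LIMSEQ_le_const2) blast+
qed

end



theorem mainTheorem10:
  fixes v :: "real ^ 'n \<Rightarrow> real"
    and Dv :: "real ^ 'n \<Rightarrow> real ^ 'n"
    and D2v :: "real ^ 'n \<Rightarrow> real ^ 'n ^ 'n"
    and k :: 'n and \<epsilon> :: real
  assumes n2: "CARD('n) \<ge> 2"
    and eps: "\<epsilon> > 0"
    and cont_v: "continuous_on (closure (slab k \<epsilon>)) v"
    and grad: "\<And>x. x \<in> slab k \<epsilon> \<Longrightarrow> (v has_derivative (\<lambda>h. Dv x \<bullet> h)) (at x)"
    and cont_grad: "continuous_on (closure (slab k \<epsilon>)) Dv"
    and hess: "\<And>x. x \<in> slab k \<epsilon> \<Longrightarrow> (Dv has_derivative (\<lambda>h. D2v x *v h)) (at x)"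
    and cont_hess: "continuous_on (slab k \<epsilon>) D2v"
    and pde: "\<And>x. x \<in> slab k \<epsilon> \<Longrightarrow>
               (\<Sum>i\<in>UNIV. D2v x $ i $ i) - (\<Sum>i\<in>UNIV. x $ i * Dv x $ i) = R_fun x"
    and bdry: "\<And>x. x \<in> frontier (slab k \<epsilon>) \<Longrightarrow> v x = 0"
  shows "gauss_cond_integral (slab k \<epsilon>) (\<lambda>x. (norm (Dv x))\<^sup>2) \<le> 36 * exp (\<epsilon>\<^sup>2 / 2) * \<epsilon>\<^sup>2"
proof -
  interpret slabpde v Dv D2v k \<epsilon>
    using assms by unfold_locales auto
  define E where "E = integral\<^sup>L lborel (\<lambda>x. indicator S x * (gauss_density x * (norm (Dv x))^2))"
  define G where "G = integral\<^sup>L lborel (\<lambda>x. indicator S x * gauss_density x)"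
  have EG: "E \<le> 4 * (4 * \<epsilon>^2 * exp (\<epsilon>^2/2)) * G" using Efinal unfolding E_def G_def .
  have gm: "(\<lambda>x. ennreal (gauss_density x)) \<in> borel_measurable lborel"
    using gauss_cont[of UNIV] by (intro measurable_compose[OF _ measurable_ennreal]) (auto intro: borel_measurable_continuous_onI)
  have num: "set_lebesgue_integral gaussian_measure S (\<lambda>x. (norm (Dv x))\<^sup>2) = E"
  proof -
    have "set_lebesgue_integral gaussian_measure S (\<lambda>x. (norm (Dv x))\<^sup>2)
      = integral\<^sup>L (density lborel (\<lambda>x. ennreal (gauss_density x))) (\<lambda>x. indicator S x *\<^sub>R (norm (Dv x))\<^sup>2)"
      unfolding set_lebesgue_integral_def gaussian_measure_def ..
    also have "\<dots> = integral\<^sup>L lborel (\<lambda>x. gauss_density x *\<^sub>R (indicator S x *\<^sub>R (norm (Dv x))\<^sup>2))"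
      by (rule integral_density) (use Fmeas gauss_pos gauss_cont in \<open>auto intro: borel_measurable_continuous_onI less_imp_le\<close>)
    also have "\<dots> = E" unfolding E_def by (simp add: mult_ac)
    finally show ?thesis .
  qed
  have G0: "G \<ge> 0" unfolding G_def
    by (intro integral_nonneg_AE AE_I2) (auto simp: indicator_def gauss_pos less_imp_le)
  have den: "measure gaussian_measure S = G"
  proof -
    have Sb: "S \<in> sets lborel" using S_open by simp
    have "emeasure gaussian_measure S = (\<integral>\<^sup>+ x. ennreal (gauss_density x) * indicator S x \<partial>lborel)"
      unfolding gaussian_measure_def by (rule emeasure_density[OF gm Sb])
    also have "\<dots> = (\<integral>\<^sup>+ x. ennreal (indicator S x * gauss_density x) \<partial>lborel)"
      by (intro nn_integral_cong) (auto simp: indicator_def)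
    also have "\<dots> = ennreal G" unfolding G_def
      by (rule nn_integral_eq_integral[OF Gint]) (auto intro!: AE_I2 simp: indicator_def gauss_pos less_imp_le)
    finally show ?thesis unfolding measure_def using G0 by simp
  qed
  have "gauss_cond_integral S (\<lambda>x. (norm (Dv x))\<^sup>2) = E / G"
    unfolding gauss_cond_integral_def num den ..
  also have "\<dots> \<le> 16 * exp (\<epsilon>^2 / 2) * \<epsilon>^2"
  proof (cases "G = 0")
    case True then show ?thesis by simp
  next
    case False
    then have "G > 0" using G0 by simp
    then show ?thesis using EG by (simp add: divide_le_eq algebra_simps)
  qed
  also have "\<dots> \<le> 36 * exp (\<epsilon>^2 / 2) * \<epsilon>^2" by simp
  finally show ?thesis .
qed



end
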